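(* Assume the seeds are i.i.d. uniform on $[n]$. Let $[\eta_{\min},\eta_{\max}]\subset(0,\tfrac12)$ be a fixed compact interval. Let $(m_k)_{k\in\mathbb N}$ be positive integers with $m_k\to\infty$, let $(n_k)$ be an arbitrary sequence of even integers $n_k\ge6$, and let $(l_k)$ be integers with $2\le l_k\le n_k/2-1$ and $l_k/n_k\in[\eta_{\min},\eta_{\max}]$ for all $k$. Then $\lim_{k\to\infty}p_1(n_k,m_k,l_k)=1$.
   Context: Candidates $[n]$, $m$ voters; voter $j$ has the clockwise oriented preference list $(s_j,s_j+1,\dots,n,1,\dots,s_j-1)$ with seed $s_j$; seeds independent uniform on $[n]$. In an election among a non-empty $S\subseteq[n]$ each voter votes for the first candidate of $S$ in its list; $\Xi_S(i)$ is the number of votes for $i$. Two-round election with partition $(A,B)$: the winner of $A$ is the $a\in A$ with $\Xi_A(a)>\Xi_A(a')$ for all other $a'\in A$ (if none, nobody wins); likewise for $B$; between first-round winners $a,b$, $a$ wins iff $\Xi_{\{a,b\}}(a)>\Xi_{\{a,b\}}(b)$ (ties: nobody wins). $A^{(1,n,l)}=\{1,\dots,l\}\cup\{l+2i:1\le i\le(n-2l)/2\}$, $B^{(1,n,l)}=[n]\setminus A^{(1,n,l)}$, and $p_1(n,m,l)$ is the probability that candidate 1 wins with partition $(A^{(1,n,l)},B^{(1,n,l)})$. *)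

theory Defs
  imports "HOL-Analysis.Analysis"
begin

definition pref_list :: "nat \<Rightarrow> nat \<Rightarrow> nat list" where
  "pref_list n s = [s..<n+1] @ [1..<s]"

definition vote :: "nat \<Rightarrow> nat \<Rightarrow> nat set \<Rightarrow> nat" where
  "vote n s S = hd (filter (\<lambda>i. i \<in> S) (pref_list n s))"

definition Xi :: "nat \<Rightarrow> nat \<Rightarrow> (nat \<Rightarrow> nat) \<Rightarrow> nat set \<Rightarrow> nat \<Rightarrow> nat" where
  "Xi n m sd S i = card {j \<in> {0..<m}. vote n (sd j) S = i}"

definition wins_in :: "nat \<Rightarrow> nat \<Rightarrow> (nat \<Rightarrow> nat) \<Rightarrow> nat set \<Rightarrow> nat \<Rightarrow> bool" where
  "wins_in n m sd S a \<longleftrightarrow> a \<in> S \<and> (\<forall>a'\<in>S. a' \<noteq> a \<longrightarrow> Xi n m sd S a > Xi n m sd S a')"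

definition wins_two_round ::
  "nat \<Rightarrow> nat \<Rightarrow> (nat \<Rightarrow> nat) \<Rightarrow> nat set \<Rightarrow> nat set \<Rightarrow> nat \<Rightarrow> bool" where
  "wins_two_round n m sd A B c \<longleftrightarrow>
     wins_in n m sd A c \<and>
     (\<exists>b. wins_in n m sd B b \<and> Xi n m sd {c, b} c > Xi n m sd {c, b} b)"

definition A1 :: "nat \<Rightarrow> nat \<Rightarrow> nat set" where
  "A1 n l = {1..l} \<union> {l + 2 * i | i. 1 \<le> i \<and> i \<le> (n - 2 * l) div 2}"

definition B1 :: "nat \<Rightarrow> nat \<Rightarrow> nat set" where
  "B1 n l = {1..n} - A1 n l"

text \<open>p_1(n,m,l): seeds i.i.d. uniform on [n], i.e. the seed vector is uniform on [n]^m.\<close>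
definition p1 :: "nat \<Rightarrow> nat \<Rightarrow> nat \<Rightarrow> real" where
  "p1 n m l = real (card {sd \<in> {0..<m} \<rightarrow>\<^sub>E {1..n}. wins_two_round n m sd (A1 n l) (B1 n l) 1})
              / real n ^ m"

end

theory Submission
  imports Defs
begin


definition Om :: "nat \<Rightarrow> nat \<Rightarrow> (nat \<Rightarrow> nat) set" where
  "Om n m = PiE {0..<m} (\<lambda>_. {1..n})"

definition cnt :: "nat \<Rightarrow> (nat \<Rightarrow> nat) \<Rightarrow> nat set \<Rightarrow> nat" where
  "cnt m sd T = card {j\<in>{0..<m}. sd j \<in> T}"

lemma Om_Suc: "Om n (Suc m) = (\<lambda>(y, g). g(m := y)) ` ({1..n} \<times> Om n m)"
  unfolding Om_def by (simp add: atLeast0_lessThan_Suc PiE_insert_eq)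

lemma Om_inj: "inj_on (\<lambda>(y, g). g(m := y)) ({1..n} \<times> Om n m)"
  unfolding Om_def using inj_combinator[of m "{0..<m}" "\<lambda>_. {1..n}"] by simp

lemma finite_Om: "finite (Om n m)"
  unfolding Om_def by (simp add: finite_PiE)

lemma card_Om: "card (Om n m) = n ^ m"
  unfolding Om_def by (simp add: card_PiE)

lemma cnt_upd: "cnt (Suc m) (g(m := y)) T = cnt m g T + (if y \<in> T then 1 else 0)"
proof -
  have "{j\<in>{0..<Suc m}. (g(m := y)) j \<in> T} = {j\<in>{0..<m}. g j \<in> T} \<union> (if y \<in> T then {m} else {})"
    by auto
  then show ?thesis unfolding cnt_def by (auto simp: card_insert_if)
qed

lemma sum_ind:
  fixes T :: "nat set"
  assumes "T \<subseteq> {1..n}"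
  shows "(\<Sum>y\<in>{1..n}. (if y \<in> T then 1 else 0::real)) = card T"
proof -
  have "(\<Sum>y\<in>{1..n}. (if y \<in> T then 1 else 0::real)) = (\<Sum>y\<in>{y\<in>{1..n}. y \<in> T}. 1)"
    by (rule sum.inter_filter[symmetric]) (rule finite_atLeastAtMost)
  also have "{y\<in>{1..n}. y \<in> T} = T" using assms by auto
  finally show ?thesis by simp
qed

lemma moments:
  assumes "T \<subseteq> {1..n}" "n > 0"
  defines "p \<equiv> real (card T) / real n"
  shows "(\<Sum>sd\<in>Om n m. (real (cnt m sd T) - m * p)) = 0 \<and>
         (\<Sum>sd\<in>Om n m. (real (cnt m sd T) - m * p)^2) = real n ^ m * m * p * (1 - p)"
proof (induction m)
  case 0
  have "Om n 0 = {\<lambda>_. undefined}" unfolding Om_def by simp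
  then show ?case by (simp add: cnt_def)
next
  case (Suc m)
  define X where "X y = (if y \<in> T then 1 else 0::real) - p" for y
  have S1: "(\<Sum>y\<in>{1..n}. X y) = 0"
    using sum_ind[OF assms(1)] assms(2) by (simp add: X_def sum_subtractf p_def)
  have S2: "(\<Sum>y\<in>{1..n}. (X y)^2) = n * p * (1 - p)"
  proof -
    have "(X y)^2 = (1 - 2*p) * (if y \<in> T then 1 else 0) + p^2" for y
      by (auto simp: X_def power2_eq_square algebra_simps)
    then have "(\<Sum>y\<in>{1..n}. (X y)^2) = (\<Sum>y\<in>{1..n}. (1 - 2*p) * (if y \<in> T then 1 else 0) + p^2)"
      by simp
    also have "\<dots> = (1 - 2*p) * (\<Sum>y\<in>{1..n}. (if y \<in> T then 1 else 0)) + n * p^2"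
      by (simp add: sum.distrib sum_distrib_left)
    also have "\<dots> = (1 - 2*p) * card T + n * p^2" by (simp only: sum_ind[OF assms(1)])
    also have "card T = n * p" using assms(2) by (simp add: p_def)
    finally show ?thesis by (simp add: power2_eq_square algebra_simps)
  qed
  define D where "D g = real (cnt m g T) - m * p" for g
  have key: "real (cnt (Suc m) (g(m := y)) T) - Suc m * p = D g + X y" for g y
    by (simp add: cnt_upd D_def X_def algebra_simps)
  have reidx: "(\<Sum>sd\<in>Om n (Suc m). f sd) = (\<Sum>y\<in>{1..n}. \<Sum>g\<in>Om n m. f (g(m := y)))" for f :: "_ \<Rightarrow> real"
  proof -
    have "(\<Sum>sd\<in>Om n (Suc m). f sd) = (\<Sum>x\<in>{1..n} \<times> Om n m. f (case x of (y, g) \<Rightarrow> g(m := y)))"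
      unfolding Om_Suc by (subst sum.reindex[OF Om_inj]) (simp add: comp_def)
    also have "\<dots> = (\<Sum>(y,g)\<in>{1..n} \<times> Om n m. f (g(m := y)))"
      by (rule sum.cong) auto
    also have "\<dots> = (\<Sum>y\<in>{1..n}. \<Sum>g\<in>Om n m. f (g(m := y)))"
      by (simp add: sum.cartesian_product)
    finally show ?thesis .
  qed
  have IH1: "(\<Sum>g\<in>Om n m. D g) = 0" and IH2: "(\<Sum>g\<in>Om n m. (D g)^2) = real n ^ m * m * p * (1 - p)"
    using Suc.IH by (auto simp: D_def)
  have "(\<Sum>sd\<in>Om n (Suc m). (real (cnt (Suc m) sd T) - Suc m * p)) = (\<Sum>y\<in>{1..n}. \<Sum>g\<in>Om n m. D g + X y)"
    by (simp only: reidx key)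
  also have "\<dots> = (\<Sum>y\<in>{1..n}. real n ^ m * X y)"
    by (simp add: sum.distrib IH1 card_Om)
  also have "\<dots> = 0" using S1 by (simp add: sum_distrib_left[symmetric])
  finally have R1: "(\<Sum>sd\<in>Om n (Suc m). (real (cnt (Suc m) sd T) - Suc m * p)) = 0" .
  have "(\<Sum>sd\<in>Om n (Suc m). (real (cnt (Suc m) sd T) - Suc m * p)^2) = (\<Sum>y\<in>{1..n}. \<Sum>g\<in>Om n m. (D g)^2 + 2 * X y * D g + (X y)^2)"
    by (simp only: reidx key) (simp add: power2_eq_square algebra_simps)
  also have "\<dots> = (\<Sum>y\<in>{1..n}. real n ^ m * m * p * (1 - p) + real n ^ m * (X y)^2)"
    by (simp add: sum.distrib IH1 IH2 card_Om sum_distrib_left[symmetric])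
  also have "\<dots> = real n * (real n ^ m * m * p * (1 - p)) + real n ^ m * (n * p * (1 - p))"
    using S2 by (simp add: sum.distrib sum_distrib_left[symmetric])
  also have "\<dots> = real n ^ Suc m * Suc m * p * (1 - p)"
    by (simp add: algebra_simps)
  finally show ?case using R1 by simp
qed

lemma cheb:
  assumes "T \<subseteq> {1..n}" "n > 0" "d > 0"
  shows "real (card {sd\<in>Om n m. d \<le> \<bar>real (cnt m sd T) - m * (real (card T) / real n)\<bar>}) * d^2
         \<le> real n ^ m * m * (real (card T) / real n)"
proof -
  define p where "p = real (card T) / real n"
  define D where "D sd = real (cnt m sd T) - m * p" for sd
  define B where "B = {sd\<in>Om n m. d \<le> \<bar>D sd\<bar>}"
  have cT: "card T \<le> n" using card_mono[OF _ assms(1)] by simp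
  have p01: "0 \<le> p" "p \<le> 1"
    using cT assms(2) by (simp_all add: p_def)
  have "real (card B) * d^2 = (\<Sum>sd\<in>B. d^2)" by simp
  also have "\<dots> \<le> (\<Sum>sd\<in>B. (D sd)^2)"
  proof (rule sum_mono)
    fix sd assume "sd \<in> B"
    then have "d \<le> \<bar>D sd\<bar>" by (auto simp: B_def)
    then have "d^2 \<le> \<bar>D sd\<bar>^2" using assms(3) by (intro power_mono) auto
    then show "d^2 \<le> (D sd)^2" by simp
  qed
  also have "\<dots> \<le> (\<Sum>sd\<in>Om n m. (D sd)^2)"
    by (rule sum_mono2) (auto simp: B_def finite_Om)
  also have "\<dots> = real n ^ m * m * p * (1 - p)"
    using moments[OF assms(1,2), of m] by (simp add: D_def p_def)
  also have "\<dots> \<le> real n ^ m * m * p"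
    using p01 by (simp add: mult_left_le)
  finally have "real (card B) * d^2 \<le> real n ^ m * m * p" .
  then show ?thesis by (simp only: B_def D_def p_def)
qed

lemma cheb_lower:
  assumes "T \<subseteq> {1..n}" "n > 0" "d > 0" "t + d \<le> m * (real (card T) / real n)"
  shows "real (card {sd\<in>Om n m. real (cnt m sd T) \<le> t}) * d^2 \<le> real n ^ m * m * (real (card T) / real n)"
proof -
  have "card {sd\<in>Om n m. real (cnt m sd T) \<le> t} \<le> card {sd\<in>Om n m. d \<le> \<bar>real (cnt m sd T) - m * (real (card T) / real n)\<bar>}"
    using assms(4) by (intro card_mono) (auto simp: finite_Om)
  then have "real (card {sd\<in>Om n m. real (cnt m sd T) \<le> t}) * d^2 \<le> real (card {sd\<in>Om n m. d \<le> \<bar>real (cnt m sd T) - m * (real (card T) / real n)\<bar>}) * d^2"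
    by (intro mult_right_mono) auto
  then show ?thesis using cheb[OF assms(1-3), of m] by linarith
qed

lemma cheb_upper:
  assumes "T \<subseteq> {1..n}" "n > 0" "d > 0" "m * (real (card T) / real n) + d \<le> t"
  shows "real (card {sd\<in>Om n m. t \<le> real (cnt m sd T)}) * d^2 \<le> real n ^ m * m * (real (card T) / real n)"
proof -
  have "card {sd\<in>Om n m. t \<le> real (cnt m sd T)} \<le> card {sd\<in>Om n m. d \<le> \<bar>real (cnt m sd T) - m * (real (card T) / real n)\<bar>}"
    using assms(4) by (intro card_mono) (auto simp: finite_Om)
  then have "real (card {sd\<in>Om n m. t \<le> real (cnt m sd T)}) * d^2 \<le> real (card {sd\<in>Om n m. d \<le> \<bar>real (cnt m sd T) - m * (real (card T) / real n)\<bar>}) * d^2"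
    by (intro mult_right_mono) auto
  then show ?thesis using cheb[OF assms(1-3), of m] by linarith
qed

lemma hd_filter_upt:
  assumes "a \<le> v" "v < b" "P v" "\<forall>x. a \<le> x \<and> x < v \<longrightarrow> \<not> P x"
  shows "hd (filter P [a..<b]) = v"
proof -
  have "[a..<b] = [a..<v] @ v # [Suc v..<b]"
    using assms(1,2) upt_add_eq_append[of a v "b - v"] upt_conv_Cons[of v b] by simp
  moreover have "filter P [a..<v] = []" using assms(4) by (auto simp: filter_empty_conv)
  ultimately show ?thesis using assms(3) by simp
qed

lemma vote_first:
  assumes "s \<le> v" "v \<le> n" "v \<in> S" "\<forall>x\<in>S. s \<le> x \<longrightarrow> v \<le> x"
  shows "vote n s S = v"
proof -
  have "hd (filter (\<lambda>i. i \<in> S) [s..<n+1]) = v"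
    by (rule hd_filter_upt[of s v "n+1"]) (use assms in auto)
  moreover have "v \<in> set (filter (\<lambda>i. i \<in> S) [s..<n+1])"
    using assms by (simp del: upt_Suc)
  then have "filter (\<lambda>i. i \<in> S) [s..<n+1] \<noteq> []" by (metis empty_iff list.set(1))
  ultimately show ?thesis by (simp add: vote_def pref_list_def del: upt_Suc)
qed

lemma vote_wrap:
  assumes "1 \<le> v" "v < s" "v \<in> S" "\<forall>x\<in>S. \<not> (s \<le> x \<and> x \<le> n)" "\<forall>x\<in>S. 1 \<le> x \<longrightarrow> v \<le> x"
  shows "vote n s S = v"
proof -
  have "filter (\<lambda>i. i \<in> S) [s..<n+1] = []"
    using assms by (auto simp: filter_empty_conv simp del: upt_Suc)
  moreover have "hd (filter (\<lambda>i. i \<in> S) [1..<s]) = v"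
    by (rule hd_filter_upt[of 1 v s]) (use assms in auto)
  ultimately show ?thesis by (simp add: vote_def pref_list_def del: upt_Suc)
qed

lemma A1_mem:
  assumes "even n" "2*l + 2 \<le> n"
  shows "x \<in> A1 n l \<longleftrightarrow> (1 \<le> x \<and> x \<le> l) \<or> (l+2 \<le> x \<and> x \<le> n - l \<and> even (x - l))"
proof
  assume "x \<in> A1 n l"
  then show "(1 \<le> x \<and> x \<le> l) \<or> (l+2 \<le> x \<and> x \<le> n - l \<and> even (x - l))"
    unfolding A1_def using assms by auto
next
  assume h: "(1 \<le> x \<and> x \<le> l) \<or> (l+2 \<le> x \<and> x \<le> n - l \<and> even (x - l))"
  show "x \<in> A1 n l"
  proof (cases "x \<le> l")
    case True then show ?thesis using h by (auto simp: A1_def)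
  next
    case False
    then have "x = l + 2 * ((x - l) div 2) \<and> 1 \<le> (x - l) div 2 \<and> (x - l) div 2 \<le> (n - 2 * l) div 2"
      using h assms by auto
    then show ?thesis unfolding A1_def by blast
  qed
qed

lemma B1_mem:
  assumes "even n" "2*l + 2 \<le> n"
  shows "x \<in> B1 n l \<longleftrightarrow> 1 \<le> x \<and> x \<le> n \<and> \<not> ((1 \<le> x \<and> x \<le> l) \<or> (l+2 \<le> x \<and> x \<le> n - l \<and> even (x - l)))"
  unfolding B1_def using A1_mem[OF assms] by auto

definition fA :: "nat \<Rightarrow> nat \<Rightarrow> nat \<Rightarrow> nat" where
  "fA n l s = (if s \<le> l then s else if s \<le> n - l then (if even (s - l) then s else s + 1) else 1)"

definition fB :: "nat \<Rightarrow> nat \<Rightarrow> nat \<Rightarrow> nat" where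
  "fB n l s = (if s \<le> l + 1 then l + 1 else if s \<le> n - l then (if odd (s - l) then s else s + 1) else s)"

definition fR :: "nat \<Rightarrow> nat \<Rightarrow> nat" where
  "fR l s = (if s = 1 then 1 else if s \<le> l + 1 then l + 1 else 1)"

lemma vA:
  assumes "even n" "2 \<le> l" "2*l + 2 \<le> n" "1 \<le> s" "s \<le> n"
  shows "vote n s (A1 n l) = fA n l s"
proof -
  note mem = A1_mem[OF assms(1,3)]
  consider "s \<le> l" | "l < s" "s \<le> n - l" "even (s - l)" | "l < s" "s \<le> n - l" "odd (s - l)" | "n - l < s"
    by linarith
  then show ?thesis
  proof cases
    case 1
    then have e: "fA n l s = s" by (simp add: fA_def)
    show ?thesis unfolding e by (rule vote_first) (use 1 assms in \<open>auto simp: mem\<close>)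
  next
    case 2
    then have e: "fA n l s = s" by (simp add: fA_def)
    have "l + 2 \<le> s" using 2 by presburger
    show ?thesis unfolding e by (rule vote_first) (use 2 assms \<open>l + 2 \<le> s\<close> in \<open>auto simp: mem\<close>)
  next
    case 3
    then have e: "fA n l s = s + 1" by (simp add: fA_def)
    have h1: "s + 1 \<le> n - l" "even (s + 1 - l)" "s \<notin> A1 n l" using assms 3 by (auto simp: mem; presburger)+
    show ?thesis unfolding e
    proof (rule vote_first)
      show "\<forall>x\<in>A1 n l. s \<le> x \<longrightarrow> s + 1 \<le> x"
        using h1(3) by (metis Suc_eq_plus1 le_antisym not_less_eq_eq)
    qed (use 3 assms h1 in \<open>auto simp: mem\<close>)
  next
    case 4
    then have e: "fA n l s = 1" using assms by (auto simp: fA_def)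
    show ?thesis unfolding e by (rule vote_wrap) (use 4 assms in \<open>auto simp: mem\<close>)
  qed
qed

lemma vB:
  assumes "even n" "2 \<le> l" "2*l + 2 \<le> n" "1 \<le> s" "s \<le> n"
  shows "vote n s (B1 n l) = fB n l s"
proof -
  note mem = B1_mem[OF assms(1,3)]
  consider "s \<le> l + 1" | "l + 1 < s" "s \<le> n - l" "odd (s - l)" | "l + 1 < s" "s \<le> n - l" "even (s - l)" | "n - l < s"
    by linarith
  then show ?thesis
  proof cases
    case 1
    then have e: "fB n l s = l + 1" by (simp add: fB_def)
    show ?thesis unfolding e by (rule vote_first) (use 1 assms in \<open>auto simp: mem\<close>)
  next
    case 2
    then have e: "fB n l s = s" by (simp add: fB_def)
    show ?thesis unfolding e by (rule vote_first) (use 2 assms in \<open>auto simp: mem\<close>)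
  next
    case 3
    then have e: "fB n l s = s + 1" by (simp add: fB_def)
    have h1: "s + 1 \<in> B1 n l" "s \<notin> B1 n l" using assms 3 by (auto simp: mem; presburger)+
    show ?thesis unfolding e
    proof (rule vote_first)
      show "\<forall>x\<in>B1 n l. s \<le> x \<longrightarrow> s + 1 \<le> x"
        using h1(2) by (metis Suc_eq_plus1 le_antisym not_less_eq_eq)
    qed (use 3 assms h1 in \<open>auto simp: mem\<close>)
  next
    case 4
    then have e: "fB n l s = s" using assms by (auto simp: fB_def)
    show ?thesis unfolding e by (rule vote_first) (use 4 assms in \<open>auto simp: mem\<close>)
  qed
qed

lemma vR:
  assumes "2 \<le> l" "2*l + 2 \<le> n" "1 \<le> s" "s \<le> n"
  shows "vote n s {1, l + 1} = fR l s"
proof -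
  consider "s = 1" | "2 \<le> s" "s \<le> l + 1" | "l + 1 < s" using assms(3) by linarith
  then show ?thesis
  proof cases
    case 1
    then show ?thesis unfolding fR_def using assms by (intro vote_first) auto
  next
    case 2
    then show ?thesis unfolding fR_def using assms by (intro vote_first) auto
  next
    case 3
    then show ?thesis unfolding fR_def using assms by (intro vote_wrap) auto
  qed
qed



lemma Xi_cnt:
  assumes "sd \<in> Om n m" "\<forall>s\<in>{1..n}. vote n s S = f s"
  shows "Xi n m sd S a = cnt m sd {s\<in>{1..n}. f s = a}"
proof -
  have "{j \<in> {0..<m}. vote n (sd j) S = a} = {j\<in>{0..<m}. sd j \<in> {s\<in>{1..n}. f s = a}}"
  proof -
    have "sd j \<in> {1..n}" if "j \<in> {0..<m}" for j using assms(1) that unfolding Om_def by auto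
    then show ?thesis using assms(2) by auto
  qed
  then show ?thesis unfolding Xi_def cnt_def by simp
qed

lemma card2: "card {x, y :: nat} \<le> 2"
  by (simp add: card_insert_if)

lemma FA1:
  assumes "2 \<le> l" "2*l + 2 \<le> n"
  shows "l + 1 \<le> card {s\<in>{1..n}. fA n l s = 1}"
proof -
  have "insert 1 {n-l+1..n} \<subseteq> {s\<in>{1..n}. fA n l s = 1}"
    using assms by (auto simp: fA_def)
  moreover have "card (insert 1 {n-l+1..n}) = l + 1" using assms by simp
  ultimately show ?thesis using card_mono[of "{s\<in>{1..n}. fA n l s = 1}" "insert 1 {n-l+1..n}"] by simp
qed

lemma FA2:
  assumes "a \<noteq> 1"
  shows "card {s\<in>{1..n}. fA n l s = a} \<le> 2"
proof -
  have "{s\<in>{1..n}. fA n l s = a} \<subseteq> {a - 1, a}"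
    using assms by (auto simp: fA_def split: if_splits)
  then have "card {s\<in>{1..n}. fA n l s = a} \<le> card {a - 1, a}" by (intro card_mono) auto
  then show ?thesis using card2[of "a - 1" a] by linarith
qed

lemma FB1:
  assumes "2 \<le> l" "2*l + 2 \<le> n"
  shows "l + 1 \<le> card {s\<in>{1..n}. fB n l s = l + 1}"
proof -
  have "{1..l+1} \<subseteq> {s\<in>{1..n}. fB n l s = l + 1}"
    using assms by (auto simp: fB_def)
  moreover have "card {1..l+1} = l + 1" by simp
  ultimately show ?thesis using card_mono[of "{s\<in>{1..n}. fB n l s = l + 1}" "{1..l+1}"] by simp
qed

lemma FB2:
  assumes "b \<noteq> l + 1"
  shows "card {s\<in>{1..n}. fB n l s = b} \<le> 2"
proof -
  have "{s\<in>{1..n}. fB n l s = b} \<subseteq> {b - 1, b}"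
    using assms by (auto simp: fB_def split: if_splits)
  then have "card {s\<in>{1..n}. fB n l s = b} \<le> card {b - 1, b}" by (intro card_mono) auto
  then show ?thesis using card2[of "b - 1" b] by linarith
qed

lemma FR1:
  assumes "2 \<le> l" "2*l + 2 \<le> n"
  shows "n - l \<le> card {s\<in>{1..n}. fR l s = 1}"
proof -
  have "insert 1 {l+2..n} \<subseteq> {s\<in>{1..n}. fR l s = 1}"
    using assms by (auto simp: fR_def)
  moreover have "card (insert 1 {l+2..n}) = n - l" using assms by simp
  ultimately show ?thesis using card_mono[of "{s\<in>{1..n}. fR l s = 1}" "insert 1 {l+2..n}"] by simp
qed

lemma FR2:
  assumes "2 \<le> l"
  shows "card {s\<in>{1..n}. fR l s = l + 1} \<le> l"
proof -
  have "{s\<in>{1..n}. fR l s = l + 1} \<subseteq> {2..l+1}"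
    using assms by (auto simp: fR_def split: if_splits)
  moreover have "card {2..l+1} = l" by simp
  ultimately show ?thesis using card_mono[of "{2..l+1}" "{s\<in>{1..n}. fR l s = l + 1}"] by simp
qed

lemma bound_conv:
  fixes X N q Q c :: real and m :: nat
  assumes "X * (m * c)^2 \<le> N * m * q" "m > 0" "c > 0" "q \<le> Q" "N \<ge> 0"
  shows "X \<le> N * (Q / c^2) / m"
proof -
  have pos: "(m * c)^2 > 0" using assms by simp
  have "X \<le> N * m * q / (m * c)^2" using assms(1) pos by (simp add: pos_le_divide_eq)
  also have "\<dots> = N * (q / c^2) / m" using assms(2,3) by (simp add: field_simps power2_eq_square)
  also have "\<dots> \<le> N * (Q / c^2) / m" using assms
    by (intro divide_right_mono mult_left_mono) (auto simp: divide_right_mono)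
  finally show ?thesis .
qed

lemma union_bound:
  assumes "finite I" "card I \<le> n" "\<forall>i\<in>I. real (card (F i)) \<le> C" "C \<ge> 0"
  shows "real (card (\<Union>i\<in>I. F i)) \<le> real n * C"
proof -
  have "card (\<Union>i\<in>I. F i) \<le> (\<Sum>i\<in>I. card (F i))" by (rule card_UN_le[OF assms(1)])
  then have "real (card (\<Union>i\<in>I. F i)) \<le> real (\<Sum>i\<in>I. card (F i))" by (simp only: of_nat_le_iff)
  also have "\<dots> = (\<Sum>i\<in>I. real (card (F i)))" by (rule of_nat_sum)
  also have "\<dots> \<le> (\<Sum>i\<in>I. C)" using assms(3) by (intro sum_mono) auto
  also have "\<dots> = real (card I) * C" by simp
  also have "\<dots> \<le> real n * C" using assms(2,4) by (intro mult_right_mono) auto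
  finally show ?thesis .
qed

lemma A1_sub: "even n \<Longrightarrow> 2*l + 2 \<le> n \<Longrightarrow> A1 n l \<subseteq> {1..n}"
  using A1_mem by fastforce

lemma main_bound:
  fixes eta e :: real
  assumes "even n" "2 \<le> l" "2*l+2 \<le> n" "0 < m" "0 < eta" "eta \<le> real l / real n"
    "real l / real n \<le> e" "e < 1/2"
  shows "1 - (96/eta^2 + 2/(1/2 - e)^2) / real m \<le> p1 n m l"
proof -
  have n0: "n > 0" using assms by linarith
  define Om' where "Om' = Om n m"
  define TA where "TA a = {s\<in>{1..n}. fA n l s = a}" for a
  define TB where "TB b = {s\<in>{1..n}. fB n l s = b}" for b
  define TR where "TR a = {s\<in>{1..n}. fR l s = a}" for a
  define t where "t = real m * ((real l + 3) / (2 * real n))"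
  define c where "c = 1/2 - e"
  define d where "d = eta/4"
  define A where "A = A1 n l - {1}"
  define B where "B = B1 n l - {l+1}"
  define bad1 where "bad1 = {sd\<in>Om'. real (cnt m sd (TA 1)) \<le> t}"
  define bad2 where "bad2 = (\<Union>a\<in>A. {sd\<in>Om'. t \<le> real (cnt m sd (TA a))})"
  define bad3 where "bad3 = {sd\<in>Om'. real (cnt m sd (TB (l+1))) \<le> t}"
  define bad4 where "bad4 = (\<Union>b\<in>B. {sd\<in>Om'. t \<le> real (cnt m sd (TB b))})"
  define bad5 where "bad5 = {sd\<in>Om'. real (cnt m sd (TR 1)) \<le> real m / 2}"
  define bad6 where "bad6 = {sd\<in>Om'. real m / 2 \<le> real (cnt m sd (TR (l+1)))}"
  define W where "W = {sd \<in> {0..<m} \<rightarrow>\<^sub>E {1..n}. wins_two_round n m sd (A1 n l) (B1 n l) 1}"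
  define N where "N = real n ^ m"
  have N0: "N > 0" using n0 by (simp add: N_def)
  have c0: "c > 0" using assms by (simp add: c_def)
  have d0: "d > 0" using assms by (simp add: d_def)
  have m0: "real m > 0" using assms by simp
  have md0: "real m * d > 0" "real m * c > 0" using m0 d0 c0 by simp_all
  have etan: "eta * n \<le> l" using assms(6) n0 by (simp add: le_divide_eq)
  have le: "real l \<le> e * n" using assms(7) n0 by (simp add: divide_le_eq)
  have num: "0 \<le> (2 * real l - 2 - eta * real n) / (4 * real n)"
    using etan assms(2) by simp
  have h1: "(real l + 3) / (2 * real n) + d \<le> (real l + 1) / real n"
  proof -
    have "(real l + 1) / real n - ((real l + 3) / (2 * real n) + d) = (2 * real l - 2 - eta * real n) / (4 * real n)"
      using n0 by (simp add: d_def field_simps)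
    then show ?thesis using num by linarith
  qed
  have h2: "2 / real n + d \<le> (real l + 3) / (2 * real n)"
  proof -
    have "(real l + 3) / (2 * real n) - (2 / real n + d) = (2 * real l - 2 - eta * real n) / (4 * real n)"
      using n0 by (simp add: d_def field_simps)
    then show ?thesis using num by linarith
  qed
  have h3: "1/2 + c \<le> (real n - real l) / real n"
  proof -
    have "(real n - real l) / real n = 1 - real l / real n" using n0 by (simp add: field_simps)
    then show ?thesis using assms(7) by (simp add: c_def)
  qed
  have h4: "real l / real n + c \<le> 1/2" using assms(7) unfolding c_def by linarith
  have sub: "TA a \<subseteq> {1..n}" "TB a \<subseteq> {1..n}" "TR a \<subseteq> {1..n}" for a
    by (auto simp: TA_def TB_def TR_def)
  have cardle: "real (card (TA a)) / real n \<le> 1" "real (card (TB a)) / real n \<le> 1" "real (card (TR a)) / real n \<le> 1" for a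
    using card_mono[OF _ sub(1)[of a]] card_mono[OF _ sub(2)[of a]] card_mono[OF _ sub(3)[of a]] n0
    by simp_all
  have B1': "real (card bad1) \<le> N * (1 / d^2) / m"
  proof -
    have "t + real m * d \<le> real m * (real (card (TA 1)) / real n)"
    proof -
      have "real l + 1 \<le> real (card (TA 1))" using FA1[OF assms(2,3)] unfolding TA_def by linarith
      then have "(real l + 1) / real n \<le> real (card (TA 1)) / real n" using n0 by (simp add: divide_right_mono)
      then have "t + real m * d \<le> real m * ((real l + 1) / real n)" using h1 m0 unfolding t_def
        by (metis distrib_left mult_left_mono less_imp_le)
      also have "\<dots> \<le> real m * (real (card (TA 1)) / real n)"
        using \<open>(real l + 1) / real n \<le> _\<close> m0 by (intro mult_left_mono) auto
      finally show ?thesis .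
    qed
    from cheb_lower[OF sub(1) n0 md0(1) this]
    have X: "real (card bad1) * (real m * d)^2 \<le> N * real m * (real (card (TA 1)) / real n)"
      unfolding bad1_def Om'_def N_def .
    show ?thesis by (rule bound_conv[OF X assms(4) d0 cardle(1) less_imp_le[OF N0]])
  qed
  have finA: "finite A" "card A \<le> n"
  proof -
    have "A \<subseteq> {1..n}" using A1_sub[OF assms(1,3)] by (auto simp: A_def)
    then show "finite A" by (rule finite_subset) simp
    show "card A \<le> n" using card_mono[OF finite_atLeastAtMost \<open>A \<subseteq> {1..n}\<close>] by simp
  qed
  have finB: "finite B" "card B \<le> n"
  proof -
    have "B \<subseteq> {1..n}" by (auto simp: B_def B1_def)
    then show "finite B" by (rule finite_subset) simp
    show "card B \<le> n" using card_mono[OF finite_atLeastAtMost \<open>B \<subseteq> {1..n}\<close>] by simp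
  qed
  have B2': "real (card bad2) \<le> N * (2 / d^2) / m"
  proof -
    have each: "real (card {sd\<in>Om'. t \<le> real (cnt m sd (TA a))}) \<le> N * ((2 / real n) / d^2) / m" if "a \<in> A" for a
    proof -
      have a1: "a \<noteq> 1" using that by (auto simp: A_def)
      have cA: "real (card (TA a)) / real n \<le> 2 / real n"
        using FA2[OF a1, of n l] n0 unfolding TA_def by (simp add: divide_right_mono)
      have "real m * (real (card (TA a)) / real n) + real m * d \<le> t"
      proof -
        have "real m * (real (card (TA a)) / real n) + real m * d = real m * (real (card (TA a)) / real n + d)"
          by (simp add: distrib_left)
        also have "\<dots> \<le> real m * (2 / real n + d)" using cA m0 by (intro mult_left_mono) auto
        also have "\<dots> \<le> t" unfolding t_def using h2 m0 by (intro mult_left_mono) auto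
        finally show ?thesis .
      qed
      from cheb_upper[OF sub(1) n0 md0(1) this]
      have X: "real (card {sd\<in>Om'. t \<le> real (cnt m sd (TA a))}) * (real m * d)^2 \<le> N * real m * (real (card (TA a)) / real n)"
        unfolding Om'_def N_def .
      show ?thesis by (rule bound_conv[OF X assms(4) d0 cA less_imp_le[OF N0]])
    qed
    have "real (card bad2) \<le> real n * (N * ((2 / real n) / d^2) / m)"
      unfolding bad2_def using finA each N0 m0 d0 by (intro union_bound) auto
    also have "\<dots> = N * (2 / d^2) / m" using n0 by (simp add: field_simps)
    finally show ?thesis .
  qed
  have B3': "real (card bad3) \<le> N * (1 / d^2) / m"
  proof -
    have "t + real m * d \<le> real m * (real (card (TB (l+1))) / real n)"
    proof -
      have "real l + 1 \<le> real (card (TB (l+1)))" using FB1[OF assms(2,3)] unfolding TB_def by linarith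
      then have "(real l + 1) / real n \<le> real (card (TB (l+1))) / real n" using n0 by (simp add: divide_right_mono)
      then have "t + real m * d \<le> real m * ((real l + 1) / real n)" using h1 m0 unfolding t_def
        by (metis distrib_left mult_left_mono less_imp_le)
      also have "\<dots> \<le> real m * (real (card (TB (l+1))) / real n)"
        using \<open>(real l + 1) / real n \<le> _\<close> m0 by (intro mult_left_mono) auto
      finally show ?thesis .
    qed
    from cheb_lower[OF sub(2) n0 md0(1) this]
    have X: "real (card bad3) * (real m * d)^2 \<le> N * real m * (real (card (TB (l+1))) / real n)"
      unfolding bad3_def Om'_def N_def .
    show ?thesis by (rule bound_conv[OF X assms(4) d0 cardle(2) less_imp_le[OF N0]])
  qed
  have B4': "real (card bad4) \<le> N * (2 / d^2) / m"
  proof -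
    have each: "real (card {sd\<in>Om'. t \<le> real (cnt m sd (TB a))}) \<le> N * ((2 / real n) / d^2) / m" if "a \<in> B" for a
    proof -
      have a1: "a \<noteq> l + 1" using that by (auto simp: B_def)
      have cA: "real (card (TB a)) / real n \<le> 2 / real n"
        using FB2[OF a1, of n] n0 unfolding TB_def by (simp add: divide_right_mono)
      have "real m * (real (card (TB a)) / real n) + real m * d \<le> t"
      proof -
        have "real m * (real (card (TB a)) / real n) + real m * d = real m * (real (card (TB a)) / real n + d)"
          by (simp add: distrib_left)
        also have "\<dots> \<le> real m * (2 / real n + d)" using cA m0 by (intro mult_left_mono) auto
        also have "\<dots> \<le> t" unfolding t_def using h2 m0 by (intro mult_left_mono) auto
        finally show ?thesis .
      qed
      from cheb_upper[OF sub(2) n0 md0(1) this]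
      have X: "real (card {sd\<in>Om'. t \<le> real (cnt m sd (TB a))}) * (real m * d)^2 \<le> N * real m * (real (card (TB a)) / real n)"
        unfolding Om'_def N_def .
      show ?thesis by (rule bound_conv[OF X assms(4) d0 cA less_imp_le[OF N0]])
    qed
    have "real (card bad4) \<le> real n * (N * ((2 / real n) / d^2) / m)"
      unfolding bad4_def using finB each N0 m0 d0 by (intro union_bound) auto
    also have "\<dots> = N * (2 / d^2) / m" using n0 by (simp add: field_simps)
    finally show ?thesis .
  qed
  have B5': "real (card bad5) \<le> N * (1 / c^2) / m"
  proof -
    have "real m / 2 + real m * c \<le> real m * (real (card (TR 1)) / real n)"
    proof -
      have "real n - real l \<le> real (card (TR 1))" using FR1[OF assms(2,3)] assms(3) unfolding TR_def by linarith
      then have "(real n - real l) / real n \<le> real (card (TR 1)) / real n" using n0 by (simp add: divide_right_mono)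
      then have "1/2 + c \<le> real (card (TR 1)) / real n" using h3 by linarith
      then have "real m * (1/2 + c) \<le> real m * (real (card (TR 1)) / real n)" using m0 by (intro mult_left_mono) auto
      then show ?thesis by (simp add: distrib_left)
    qed
    from cheb_lower[OF sub(3) n0 md0(2) this]
    have X: "real (card bad5) * (real m * c)^2 \<le> N * real m * (real (card (TR 1)) / real n)"
      unfolding bad5_def Om'_def N_def .
    show ?thesis by (rule bound_conv[OF X assms(4) c0 cardle(3) less_imp_le[OF N0]])
  qed
  have B6': "real (card bad6) \<le> N * (1 / c^2) / m"
  proof -
    have "real m * (real (card (TR (l+1))) / real n) + real m * c \<le> real m / 2"
    proof -
      have "real (card (TR (l+1))) \<le> real l" using FR2[OF assms(2), of n] unfolding TR_def by linarith
      then have "real (card (TR (l+1))) / real n \<le> real l / real n" using n0 by (simp add: divide_right_mono)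
      then have "real (card (TR (l+1))) / real n + c \<le> 1/2" using h4 by linarith
      then have "real m * (real (card (TR (l+1))) / real n + c) \<le> real m * (1/2)" using m0 by (intro mult_left_mono) auto
      then show ?thesis by (simp add: distrib_left)
    qed
    from cheb_upper[OF sub(3) n0 md0(2) this]
    have X: "real (card bad6) * (real m * c)^2 \<le> N * real m * (real (card (TR (l+1))) / real n)"
      unfolding bad6_def Om'_def N_def .
    show ?thesis by (rule bound_conv[OF X assms(4) c0 cardle(3) less_imp_le[OF N0]])
  qed
  have memA: "x \<in> A1 n l \<longleftrightarrow> (1 \<le> x \<and> x \<le> l) \<or> (l+2 \<le> x \<and> x \<le> n - l \<and> even (x - l))" for x
    using A1_mem[OF assms(1,3)] .
  have memB: "x \<in> B1 n l \<longleftrightarrow> 1 \<le> x \<and> x \<le> n \<and> \<not> ((1 \<le> x \<and> x \<le> l) \<or> (l+2 \<le> x \<and> x \<le> n - l \<and> even (x - l)))" for x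
    using B1_mem[OF assms(1,3)] .
  have cov: "sd \<in> W" if sd: "sd \<in> Om'" and nb: "sd \<notin> bad1" "sd \<notin> bad2" "sd \<notin> bad3" "sd \<notin> bad4" "sd \<notin> bad5" "sd \<notin> bad6" for sd
  proof -
    have sdO: "sd \<in> Om n m" using sd by (simp add: Om'_def)
    have XA: "Xi n m sd (A1 n l) a = cnt m sd (TA a)" for a
      unfolding TA_def by (rule Xi_cnt[OF sdO]) (use vA[OF assms(1,2,3)] in auto)
    have XB: "Xi n m sd (B1 n l) a = cnt m sd (TB a)" for a
      unfolding TB_def by (rule Xi_cnt[OF sdO]) (use vB[OF assms(1,2,3)] in auto)
    have XR: "Xi n m sd {1, l+1} a = cnt m sd (TR a)" for a
      unfolding TR_def by (rule Xi_cnt[OF sdO]) (use vR[OF assms(2,3)] in auto)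
    have i1: "t < real (cnt m sd (TA 1))" using nb(1) sd unfolding bad1_def by auto
    have i2: "real (cnt m sd (TA a)) < t" if "a \<in> A" for a using nb(2) sd that unfolding bad2_def by auto
    have i3: "t < real (cnt m sd (TB (l+1)))" using nb(3) sd unfolding bad3_def by auto
    have i4: "real (cnt m sd (TB a)) < t" if "a \<in> B" for a using nb(4) sd that unfolding bad4_def by auto
    have i5: "real m / 2 < real (cnt m sd (TR 1))" using nb(5) sd unfolding bad5_def by auto
    have i6: "real (cnt m sd (TR (l+1))) < real m / 2" using nb(6) sd unfolding bad6_def by auto
    have w1: "wins_in n m sd (A1 n l) 1"
      unfolding wins_in_def XA
    proof (intro conjI ballI impI)
      show "1 \<in> A1 n l" using assms(2) by (simp add: memA)
      fix a' assume "a' \<in> A1 n l" "a' \<noteq> 1"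
      then have "a' \<in> A" by (simp add: A_def)
      then show "cnt m sd (TA a') < cnt m sd (TA 1)" using i1 i2[of a'] by linarith
    qed
    have w2: "wins_in n m sd (B1 n l) (l+1)"
      unfolding wins_in_def XB
    proof (intro conjI ballI impI)
      show "l + 1 \<in> B1 n l" using assms(3) by (simp add: memB)
      fix a' assume "a' \<in> B1 n l" "a' \<noteq> l + 1"
      then have "a' \<in> B" by (simp add: B_def)
      then show "cnt m sd (TB a') < cnt m sd (TB (l+1))" using i3 i4[of a'] by linarith
    qed
    have w3: "Xi n m sd {1, l+1} 1 > Xi n m sd {1, l+1} (l+1)"
      unfolding XR using i5 i6 by linarith
    have "wins_two_round n m sd (A1 n l) (B1 n l) 1"
      unfolding wins_two_round_def using w1 w2 w3 by blast
    moreover have "sd \<in> {0..<m} \<rightarrow>\<^sub>E {1..n}" using sdO by (simp add: Om_def)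
    ultimately show ?thesis by (simp add: W_def)
  qed
  define bad where "bad = bad1 \<union> bad2 \<union> bad3 \<union> bad4 \<union> bad5 \<union> bad6"
  have "Om' \<subseteq> W \<union> bad" using cov unfolding bad_def by blast
  have finO: "finite Om'" by (simp add: Om'_def finite_Om)
  have "bad2 \<subseteq> Om'" "bad4 \<subseteq> Om'" by (auto simp: bad2_def bad4_def)
  then have f24: "finite bad2" "finite bad4" using finO finite_subset by auto
  have fins: "finite W" "finite bad1" "finite bad2" "finite bad3" "finite bad4" "finite bad5" "finite bad6"
    using finO f24 by (auto simp: W_def Om'_def Om_def bad1_def bad3_def bad5_def bad6_def finite_PiE)
  have "card Om' \<le> card (W \<union> bad)"
    by (rule card_mono) (use fins \<open>Om' \<subseteq> W \<union> bad\<close> in \<open>auto simp: bad_def\<close>)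
  also have "\<dots> \<le> card W + card bad" by (rule card_Un_le)
  also have "card bad \<le> card bad1 + card bad2 + card bad3 + card bad4 + card bad5 + card bad6"
    unfolding bad_def by (meson add_mono_thms_linordered_semiring(3) card_Un_le dual_order.trans)
  finally have "real (card Om') \<le> real (card W) + (real (card bad1) + real (card bad2) + real (card bad3) + real (card bad4) + real (card bad5) + real (card bad6))"
    by linarith
  also have "\<dots> \<le> real (card W) + (N * (1 / d^2) / m + N * (2 / d^2) / m + N * (1 / d^2) / m + N * (2 / d^2) / m + N * (1 / c^2) / m + N * (1 / c^2) / m)"
    using B1' B2' B3' B4' B5' B6' by linarith
  also have "N * (1 / d^2) / m + N * (2 / d^2) / m + N * (1 / d^2) / m + N * (2 / d^2) / m + N * (1 / c^2) / m + N * (1 / c^2) / m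
      = N * ((96/eta^2 + 2/(1/2 - e)^2) / real m)"
    using d0 m0 assms(5) by (simp add: d_def c_def field_simps) 
  finally have main: "N - N * ((96/eta^2 + 2/(1/2 - e)^2) / real m) \<le> real (card W)"
    using card_Om[of n m] by (simp add: Om'_def N_def)
  have "p1 n m l = real (card W) / N" by (simp add: p1_def W_def N_def)
  moreover have "1 - (96/eta^2 + 2/(1/2 - e)^2) / real m \<le> real (card W) / N"
    using main N0 by (simp add: field_simps)
  ultimately show ?thesis by simp
qed

lemma p1_le1:
  assumes "n > 0"
  shows "p1 n m l \<le> 1"
proof -
  have "card {sd \<in> {0..<m} \<rightarrow>\<^sub>E {1..n}. wins_two_round n m sd (A1 n l) (B1 n l) 1} \<le> card ({0..<m} \<rightarrow>\<^sub>E {1..n})"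
    by (rule card_mono) (auto simp: finite_PiE)
  also have "\<dots> = n ^ m" by (simp add: card_PiE)
  finally have "real (card {sd \<in> {0..<m} \<rightarrow>\<^sub>E {1..n}. wins_two_round n m sd (A1 n l) (B1 n l) 1}) \<le> real n ^ m"
    by (metis of_nat_le_iff of_nat_power)
  then show ?thesis using assms by (simp add: p1_def divide_le_eq_1)
qed

theorem mainTheorem11:
  fixes eta_min eta_max :: real and m n l :: "nat \<Rightarrow> nat"
  assumes "0 < eta_min" and "eta_min \<le> eta_max" and "eta_max < 1/2"
    and "\<forall>k. 0 < m k" and "filterlim m at_top sequentially"
    and "\<forall>k. even (n k) \<and> 6 \<le> n k"
    and "\<forall>k. 2 \<le> l k \<and> real (l k) \<le> real (n k) / 2 - 1"
    and "\<forall>k. eta_min \<le> real (l k) / real (n k) \<and> real (l k) / real (n k) \<le> eta_max"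
  shows "(\<lambda>k. p1 (n k) (m k) (l k)) \<longlonglongrightarrow> 1"
proof -
  define K where "K = 96/eta_min^2 + 2/(1/2 - eta_max)^2"
  have lower: "1 - K / real (m k) \<le> p1 (n k) (m k) (l k)" for k
  proof -
    have a7: "2 \<le> l k" "real (l k) \<le> real (n k) / 2 - 1" using assms(7) by blast+
    have "real (2 * l k + 2) \<le> real (n k)" using a7(2) by simp
    then have ln: "2 * l k + 2 \<le> n k" by linarith
    have ev: "even (n k)" using assms(6) by blast
    have a8: "eta_min \<le> real (l k) / real (n k)" "real (l k) / real (n k) \<le> eta_max" using assms(8) by blast+
    have m0: "0 < m k" using assms(4) by blast
    show ?thesis unfolding K_def by (rule main_bound[OF ev a7(1) ln m0 assms(1) a8 assms(3)])
  qed
  have upper: "p1 (n k) (m k) (l k) \<le> 1" for k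
  proof -
    have "6 \<le> n k" using assms(6) by blast
    then show ?thesis by (intro p1_le1) simp
  qed
  have "filterlim (\<lambda>k. real (m k)) at_top sequentially"
    using filterlim_compose[OF filterlim_real_sequentially assms(5)] .
  then have "(\<lambda>k. K / real (m k)) \<longlonglongrightarrow> 0"
    by (intro tendsto_divide_0[OF tendsto_const] filterlim_at_top_imp_at_infinity)
  then have lim: "(\<lambda>k. 1 - K / real (m k)) \<longlonglongrightarrow> 1"
    using tendsto_diff[OF tendsto_const, of _ 0 sequentially 1] by simp
  show ?thesis
    by (rule tendsto_sandwich[OF _ _ lim tendsto_const]) (use lower upper in auto)
qed

end
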